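(* Let $\mathcal T$ be a good triangulation of $\mathcal C_G$ and $S\in\mathcal T$ a maximal simplex. Then every connected component of the graph $(V,D(S))$ (including components consisting of a single node) contains exactly one selected node, i.e. exactly one node of $V(S)$.
   Context: For a finite undirected multigraph $G=(V,E)$ (loops, parallel edges and isolated nodes allowed) with $n=|V|$, $m=|E|$, work in $\mathbb{R}^V\times\mathbb{R}^E\cong\mathbb{R}^{n+m}$ with standard basis vectors $e_u$ ($u\in V$), $e_f$ ($f\in E$). Fix for each edge $f$ an ordering $(u,v)$ of its endpoints ($u=v$ for a loop) and set $\widetilde e_f=e_u+e_v-e_f$, $\overleftarrow e_f=e_u-e_v+e_f$, $\overrightarrow e_f=-e_u+e_v+e_f$ (so for a loop $\overleftarrow e_f=\overrightarrow e_f=e_f$). The cosmological polytope $\mathcal C_G$ is the convex hull of $\{e_f,\widetilde e_f,\overleftarrow e_f,\overrightarrow e_f: f\in E\}\cup\{e_u: u\in V\}$; these are exactly its lattice points, and it is an $(n+m-1)$-dimensional polytope in the hyperplane $\sum_i x_i=1$. A good triangulation of $\mathcal C_G$ is a regular triangulation (induced by a height function on the lattice points of $\mathcal C_G$) whose vertex set is the set of all lattice points of $\mathcal C_G$ and which contains the standard simplex $\mathrm{conv}\{e_u,e_f: u\in V, f\in E\}$ as a maximal cell; simplices are identified with their vertex sets. For a simplex $S\in\mathcal T$: the selected nodes are $V(S)=\{u\in V: e_u\in S\}$; the squiggly edges $\widetilde E(S)=\{f:\widetilde e_f\in S\}$; the selected edges $\widehat E(S)=\{f: e_f\in S\}$;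 for non-loop edges $f$, $f\in\overleftarrow E(S)$ iff $\overleftarrow e_f\in S$ and $f\in\overrightarrow E(S)$ iff $\overrightarrow e_f\in S$ (loops are never in $\overleftarrow E(S)\cup\overrightarrow E(S)$); the double edges are $D(S)=(\overleftarrow E(S)\cup\overrightarrow E(S))\cap\widehat E(S)$. *)

theory Defs
  imports Complex_Main
begin

text \<open>A finite multigraph is given by a node set V, an edge set E and, for every
edge f, a fixed ordering (src f, tgt f) of its endpoints (src f = tgt f for a loop).
Points of R^V x R^E are functions on the index type 'v + 'e (Inl u for nodes,
Inr f for edges); only coordinates in Inl ` V \<union> Inr ` E are ever nonzero.\<close>

type_synonym ('v, 'e) pt = "'v + 'e \<Rightarrow> real"

definition multigraph :: "'v set \<Rightarrow> 'e set \<Rightarrow> ('e \<Rightarrow> 'v) \<Rightarrow> ('e \<Rightarrow> 'v) \<Rightarrow> bool" where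
  "multigraph V E src tgt \<longleftrightarrow> finite V \<and> finite E \<and> (\<forall>f\<in>E. src f \<in> V \<and> tgt f \<in> V)"

definition coords :: "'v set \<Rightarrow> 'e set \<Rightarrow> ('v + 'e) set" where
  "coords V E = Inl ` V \<union> Inr ` E"

definition unitv :: "'i \<Rightarrow> 'i \<Rightarrow> real" where
  "unitv i = (\<lambda>j. if j = i then 1 else 0)"

definition e_node :: "'v \<Rightarrow> ('v, 'e) pt" where
  "e_node u = unitv (Inl u)"

definition e_edge :: "'e \<Rightarrow> ('v, 'e) pt" where
  "e_edge f = unitv (Inr f)"

definition e_tilde :: "('e \<Rightarrow> 'v) \<Rightarrow> ('e \<Rightarrow> 'v) \<Rightarrow> 'e \<Rightarrow> ('v, 'e) pt" where
  "e_tilde src tgt f = (\<lambda>i. unitv (Inl (src f)) i + unitv (Inl (tgt f)) i - unitv (Inr f) i)"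

definition e_left :: "('e \<Rightarrow> 'v) \<Rightarrow> ('e \<Rightarrow> 'v) \<Rightarrow> 'e \<Rightarrow> ('v, 'e) pt" where
  "e_left src tgt f = (\<lambda>i. unitv (Inl (src f)) i - unitv (Inl (tgt f)) i + unitv (Inr f) i)"

definition e_right :: "('e \<Rightarrow> 'v) \<Rightarrow> ('e \<Rightarrow> 'v) \<Rightarrow> 'e \<Rightarrow> ('v, 'e) pt" where
  "e_right src tgt f = (\<lambda>i. - unitv (Inl (src f)) i + unitv (Inl (tgt f)) i + unitv (Inr f) i)"

definition cosmo_points :: "'v set \<Rightarrow> 'e set \<Rightarrow> ('e \<Rightarrow> 'v) \<Rightarrow> ('e \<Rightarrow> 'v) \<Rightarrow> ('v, 'e) pt set" where
  "cosmo_points V E src tgt =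
     e_node ` V \<union> e_edge ` E \<union> e_tilde src tgt ` E \<union> e_left src tgt ` E \<union> e_right src tgt ` E"

definition std_simplex :: "'v set \<Rightarrow> 'e set \<Rightarrow> ('v, 'e) pt set" where
  "std_simplex V E = e_node ` V \<union> e_edge ` E"

definition lin :: "('v + 'e) set \<Rightarrow> ('v, 'e) pt \<Rightarrow> ('v, 'e) pt \<Rightarrow> real" where
  "lin I c x = (\<Sum>i\<in>I. c i * x i)"

text \<open>Cells (faces) of the regular subdivision of the point configuration A
induced by the height function h: sets sigma of points of A on which some affine
function lies on the lifted points, with all other points strictly above it.\<close>
definition regular_cells :: "('v + 'e) set \<Rightarrow> ('v, 'e) pt set \<Rightarrow> (('v, 'e) pt \<Rightarrow> real)
     \<Rightarrow> ('v, 'e) pt set set" where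
  "regular_cells I A h = {\<sigma>. \<sigma> \<subseteq> A \<and>
     (\<exists>c d. (\<forall>a\<in>\<sigma>. lin I c a + d = h a) \<and> (\<forall>a\<in>A - \<sigma>. lin I c a + d < h a))}"

definition aff_indep :: "('v + 'e) set \<Rightarrow> ('v, 'e) pt set \<Rightarrow> bool" where
  "aff_indep I \<sigma> \<longleftrightarrow> (\<forall>\<mu>. (\<Sum>a\<in>\<sigma>. \<mu> a) = 0 \<and> (\<forall>i\<in>I. (\<Sum>a\<in>\<sigma>. \<mu> a * a i) = 0)
                          \<longrightarrow> (\<forall>a\<in>\<sigma>. \<mu> a = 0))"

definition maximal_in :: "'a set \<Rightarrow> 'a set set \<Rightarrow> bool" where
  "maximal_in S T \<longleftrightarrow> S \<in> T \<and> \<not> (\<exists>S'\<in>T. S \<subset> S')"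

definition good_triangulation :: "'v set \<Rightarrow> 'e set \<Rightarrow> ('e \<Rightarrow> 'v) \<Rightarrow> ('e \<Rightarrow> 'v)
     \<Rightarrow> ('v, 'e) pt set set \<Rightarrow> bool" where
  "good_triangulation V E src tgt T \<longleftrightarrow>
     (\<exists>h. T = regular_cells (coords V E) (cosmo_points V E src tgt) h) \<and>
     (\<forall>\<sigma>\<in>T. aff_indep (coords V E) \<sigma>) \<and>
     \<Union>T = cosmo_points V E src tgt \<and>
     maximal_in (std_simplex V E) T"

definition selected_nodes :: "'v set \<Rightarrow> ('v, 'e) pt set \<Rightarrow> 'v set" where
  "selected_nodes V S = {u\<in>V. e_node u \<in> S}"

definition double_edges :: "'e set \<Rightarrow> ('e \<Rightarrow> 'v) \<Rightarrow> ('e \<Rightarrow> 'v) \<Rightarrow> ('v, 'e) pt set \<Rightarrow> 'e set" where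
  "double_edges E src tgt S = {f\<in>E. src f \<noteq> tgt f \<and> e_edge f \<in> S \<and>
      (e_left src tgt f \<in> S \<or> e_right src tgt f \<in> S)}"

definition adj :: "('e \<Rightarrow> 'v) \<Rightarrow> ('e \<Rightarrow> 'v) \<Rightarrow> 'e set \<Rightarrow> ('v \<times> 'v) set" where
  "adj src tgt D = {(src f, tgt f) | f. f \<in> D} \<union> {(tgt f, src f) | f. f \<in> D}"

definition component :: "'v set \<Rightarrow> ('e \<Rightarrow> 'v) \<Rightarrow> ('e \<Rightarrow> 'v) \<Rightarrow> 'e set \<Rightarrow> 'v \<Rightarrow> 'v set" where
  "component V src tgt D u = {w\<in>V. (u, w) \<in> (adj src tgt D)\<^sup>*}"

definition components :: "'v set \<Rightarrow> ('e \<Rightarrow> 'v) \<Rightarrow> ('e \<Rightarrow> 'v) \<Rightarrow> 'e set \<Rightarrow> 'v set set" where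
  "components V src tgt D = component V src tgt D ` V"

end

theory Submission
  imports Defs
begin

lemma lin_pair:
  assumes "\<forall>i. p i + q i = r i + s i"
  shows "lin I c p + lin I c q = lin I c r + lin I c s"
proof -
  have "lin I c p + lin I c q = (\<Sum>i\<in>I. c i * (p i + q i))"
    unfolding lin_def by (simp add: sum.distrib[symmetric] algebra_simps)
  also have "\<dots> = (\<Sum>i\<in>I. c i * (r i + s i))" using assms by simp
  also have "\<dots> = lin I c r + lin I c s"
    unfolding lin_def by (simp add: sum.distrib[symmetric] algebra_simps)
  finally show ?thesis .
qed

lemma lin_add: "lin I c (\<lambda>i. x i + y i) = lin I c x + lin I c y"
  unfolding lin_def by (simp add: sum.distrib algebra_simps)
lemma lin_diff: "lin I c (\<lambda>i. x i - y i) = lin I c x - lin I c y"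
  unfolding lin_def by (simp add: sum_subtractf algebra_simps)
lemma lin_neg: "lin I c (\<lambda>i. - x i) = - lin I c x"
  unfolding lin_def by (simp add: sum_negf)
lemma lin_unitv: "finite I \<Longrightarrow> j \<in> I \<Longrightarrow> lin I c (unitv j) = c j"
  unfolding lin_def unitv_def by (simp add: if_distrib cong: if_cong)
lemma lin_tilt: "lin I (\<lambda>i. c i + t * c' i) a = lin I c a + t * lin I c' a"
  unfolding lin_def by (simp add: sum.distrib sum_distrib_left algebra_simps)

lemma neg_notin_Z: "p j = -1 \<Longrightarrow> p \<notin> std_simplex V E"
  unfolding std_simplex_def e_node_def e_edge_def unitv_def by (auto split: if_splits)
lemma neg_notin_nodes: "p j = -1 \<Longrightarrow> p \<notin> range e_node"
  unfolding e_node_def unitv_def by (auto split: if_splits)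
lemma edge_notin_nodes: "(e_edge f :: ('v,'e) pt) \<notin> range e_node"
proof
  assume "(e_edge f :: ('v,'e) pt) \<in> range e_node"
  then obtain x :: 'v where x: "(e_edge f :: ('v,'e) pt) = e_node x" by blast
  have "(e_edge f :: ('v,'e) pt) (Inr f) = (e_node x :: ('v,'e) pt) (Inr f)" using x by simp
  then show False unfolding e_edge_def e_node_def unitv_def by simp
qed
lemma e_node_inj: "(e_node a :: ('v,'e) pt) = e_node b \<Longrightarrow> a = b"
proof -
  assume h: "(e_node a :: ('v,'e) pt) = e_node b"
  have "(e_node a :: ('v,'e) pt) (Inl a) = (e_node b :: ('v,'e) pt) (Inl a)" using h by simp
  then show "a = b" unfolding e_node_def unitv_def by (auto split: if_splits)
qed

lemma pair_contra:
  assumes S1: "\<forall>a\<in>S. lin I c a + d = h a" and S2: "\<forall>a\<in>A - S. lin I c a + d < h a"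
    and Z1: "\<forall>a\<in>Z. lin I c0 a + d0 = h a" and Z2: "\<forall>a\<in>A - Z. lin I c0 a + d0 < h a"
    and "p \<in> S" "q \<in> S" "p \<in> A" "q \<in> A" "r \<in> A" "s \<in> A" "r \<in> Z" "s \<in> Z" "p \<notin> Z"
    and eq: "\<forall>i. p i + q i = r i + s i"
  shows False
proof -
  have l: "lin I c p + lin I c q = lin I c r + lin I c s" using lin_pair[OF eq] .
  have l0: "lin I c0 p + lin I c0 q = lin I c0 r + lin I c0 s" using lin_pair[OF eq] .
  have le: "\<And>a. a \<in> A \<Longrightarrow> lin I c a + d \<le> h a" using S1 S2
    by (metis Diff_iff order_le_less)
  have le0: "\<And>a. a \<in> A \<Longrightarrow> lin I c0 a + d0 \<le> h a" using Z1 Z2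
    by (metis Diff_iff order_le_less)
  have "lin I c p + d = h p" "lin I c q + d = h q" using S1 assms by auto
  moreover have "lin I c r + d \<le> h r" "lin I c s + d \<le> h s" using le assms by auto
  moreover have "lin I c0 r + d0 = h r" "lin I c0 s + d0 = h s" using Z1 assms by auto
  moreover have "lin I c0 p + d0 < h p" using Z2 assms by auto
  moreover have "lin I c0 q + d0 \<le> h q" using le0 assms by auto
  ultimately show False using l l0 by linarith
qed

lemma tilt:
  assumes finA: "finite A" and SA: "S \<subseteq> A"
    and S1: "\<forall>a\<in>S. lin I c a + d = h a" and S2: "\<forall>a\<in>A - S. lin I c a + d < h a"
    and Z: "\<forall>a\<in>S. lin I c' a = 0" and a0: "a0 \<in> A" "lin I c' a0 > 0"
  shows "\<exists>\<sigma>\<in>regular_cells I A h. S \<subset> \<sigma>"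
proof -
  define P where "P = {a\<in>A. lin I c' a > 0}"
  define r where "r a = (h a - (lin I c a + d)) / lin I c' a" for a
  have PS: "P \<subseteq> A - S" unfolding P_def using Z by auto
  have finP: "finite P" using finA unfolding P_def by simp
  have a0P: "a0 \<in> P" unfolding P_def using a0 by simp
  have rpos: "r a > 0" if "a \<in> P" for a
    using that PS S2 unfolding r_def P_def by (auto intro!: divide_pos_pos)
  define t where "t = Min (r ` P)"
  have "t \<in> r ` P" unfolding t_def using finP a0P by (intro Min_in) auto
  then obtain a1 where a1: "a1 \<in> P" "r a1 = t" by auto
  have tpos: "t > 0" using rpos a1 by auto
  have tle: "t \<le> r a" if "a \<in> P" for a unfolding t_def using finP that by simp
  define \<sigma> where "\<sigma> = S \<union> {a\<in>P. r a = t}"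
  have "\<sigma> \<in> regular_cells I A h"
    unfolding regular_cells_def
  proof (intro CollectI conjI exI)
    show "\<sigma> \<subseteq> A" unfolding \<sigma>_def using SA PS by auto
    show "\<forall>a\<in>\<sigma>. lin I (\<lambda>i. c i + t * c' i) a + d = h a"
    proof
      fix a assume "a \<in> \<sigma>"
      then consider "a \<in> S" | "a \<in> P" "r a = t" unfolding \<sigma>_def by auto
      then show "lin I (\<lambda>i. c i + t * c' i) a + d = h a"
      proof cases
        case 1 then show ?thesis using S1 Z by (simp add: lin_tilt)
      next
        case 2
        then have "lin I c' a > 0" unfolding P_def by simp
        then show ?thesis using 2 unfolding r_def lin_tilt by (auto simp: field_simps)
      qed
    qed
    show "\<forall>a\<in>A - \<sigma>. lin I (\<lambda>i. c i + t * c' i) a + d < h a"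
    proof
      fix a assume a: "a \<in> A - \<sigma>"
      show "lin I (\<lambda>i. c i + t * c' i) a + d < h a"
      proof (cases "a \<in> P")
        case True
        then have "r a > t" using tle a unfolding \<sigma>_def by force
        moreover have "lin I c' a > 0" using True unfolding P_def by simp
        ultimately show ?thesis unfolding r_def lin_tilt by (auto simp: field_simps)
      next
        case False
        then have "lin I c' a \<le> 0" using a unfolding P_def by auto
        then have "t * lin I c' a \<le> 0" using tpos by (simp add: mult_nonneg_nonpos)
        moreover have "lin I c a + d < h a" using S2 a unfolding \<sigma>_def by auto
        ultimately show ?thesis unfolding lin_tilt by linarith
      qed
    qed
  qed
  moreover have "S \<subset> \<sigma>" unfolding \<sigma>_def using a1 PS by auto
  ultimately show ?thesis by blast
qed


theorem mainTheorem3: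
  fixes V :: "'v set" and E :: "'e set" and src tgt :: "'e \<Rightarrow> 'v"
    and T :: "('v, 'e) pt set set" and S :: "('v, 'e) pt set"
  assumes "multigraph V E src tgt"
    and "good_triangulation V E src tgt T"
    and "maximal_in S T"
  shows "\<forall>C\<in>components V src tgt (double_edges E src tgt S).
           card (C \<inter> selected_nodes V S) = 1"
proof -
  define I where "I = coords V E"
  define A where "A = cosmo_points V E src tgt"
  define Z where "Z = (std_simplex V E :: ('v,'e) pt set)"
  define D where "D = double_edges E src tgt S"
  define sel where "sel = selected_nodes V S"
  have finV: "finite V" and finE: "finite E" and st: "\<And>f. f \<in> E \<Longrightarrow> src f \<in> V \<and> tgt f \<in> V"
    using assms(1) unfolding multigraph_def by auto
  have finI: "finite I" unfolding I_def coords_def using finV finE by simp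
  have finA: "finite A" unfolding A_def cosmo_points_def using finV finE by simp
  obtain h where Th: "T = regular_cells I A h"
    using assms(2) unfolding good_triangulation_def I_def A_def by blast
  have ind: "aff_indep I S" using assms(2,3) unfolding good_triangulation_def maximal_in_def I_def by blast
  have SinT: "S \<in> T" and Smax: "\<not>(\<exists>S'\<in>T. S \<subset> S')" using assms(3) unfolding maximal_in_def by auto
  have ZinT: "Z \<in> T" using assms(2) unfolding good_triangulation_def maximal_in_def Z_def by blast
  obtain c d where SA: "S \<subseteq> A" and S1: "\<forall>a\<in>S. lin I c a + d = h a" and S2: "\<forall>a\<in>A - S. lin I c a + d < h a"
    using SinT unfolding Th regular_cells_def by blast
  obtain c0 d0 where Z1: "\<forall>a\<in>Z. lin I c0 a + d0 = h a" and Z2: "\<forall>a\<in>A - Z. lin I c0 a + d0 < h a"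
    using ZinT unfolding Th regular_cells_def by blast
  have finS: "finite S" using finA SA finite_subset by blast
  have nA: "e_node x \<in> A" if "x \<in> V" for x using that unfolding A_def cosmo_points_def by blast
  have nZ: "e_node x \<in> Z" if "x \<in> V" for x using that unfolding Z_def std_simplex_def by blast
  have eA: "e_edge f \<in> A" if "f \<in> E" for f using that unfolding A_def cosmo_points_def by blast
  have eZ: "e_edge f \<in> Z" if "f \<in> E" for f using that unfolding Z_def std_simplex_def by blast
  have tA: "e_tilde src tgt f \<in> A" if "f \<in> E" for f using that unfolding A_def cosmo_points_def by blast
  have lA: "e_left src tgt f \<in> A" if "f \<in> E" for f using that unfolding A_def cosmo_points_def by blast
  have rA: "e_right src tgt f \<in> A" if "f \<in> E" for f using that unfolding A_def cosmo_points_def by blast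
  have tval: "e_tilde src tgt f (Inr f) = -1" for f unfolding e_tilde_def unitv_def by simp
  have lval: "src f \<noteq> tgt f \<Longrightarrow> e_left src tgt f (Inl (tgt f)) = -1" for f
    unfolding e_left_def unitv_def by simp
  have rval: "src f \<noteq> tgt f \<Longrightarrow> e_right src tgt f (Inl (src f)) = -1" for f
    unfolding e_right_def unitv_def by simp
  have lloop: "src f = tgt f \<Longrightarrow> e_left src tgt f = e_edge f" for f
    unfolding e_left_def e_edge_def by simp
  have rloop: "src f = tgt f \<Longrightarrow> e_right src tgt f = e_edge f" for f
    unfolding e_right_def e_edge_def by simp
  note PC = pair_contra[OF S1 S2 Z1 Z2]
  have P1: "\<not> (e_tilde src tgt f \<in> S \<and> e_edge f \<in> S)" if f: "f \<in> E" for f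
  proof
    assume a: "e_tilde src tgt f \<in> S \<and> e_edge f \<in> S"
    show False
    proof (rule PC[of "e_tilde src tgt f" "e_edge f" "e_node (src f)" "e_node (tgt f)"])
      show "\<forall>i. e_tilde src tgt f i + e_edge f i = e_node (src f) i + e_node (tgt f) i"
        unfolding e_tilde_def e_edge_def e_node_def by simp
    qed (use a f st nA nZ eA tA neg_notin_Z[of "e_tilde src tgt f" "Inr f" V E, OF tval] in \<open>auto simp: Z_def\<close>)
  qed
  have P2: "\<not> (e_tilde src tgt f \<in> S \<and> e_left src tgt f \<in> S)" if f: "f \<in> E" "src f \<noteq> tgt f" for f
  proof
    assume a: "e_tilde src tgt f \<in> S \<and> e_left src tgt f \<in> S"
    show False
    proof (rule PC[of "e_tilde src tgt f" "e_left src tgt f" "e_node (src f)" "e_node (src f)"])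
      show "\<forall>i. e_tilde src tgt f i + e_left src tgt f i = e_node (src f) i + e_node (src f) i"
        unfolding e_tilde_def e_left_def e_node_def by simp
    qed (use a f st nA nZ lA tA neg_notin_Z[of "e_tilde src tgt f" "Inr f" V E, OF tval] in \<open>auto simp: Z_def\<close>)
  qed
  have P3: "\<not> (e_tilde src tgt f \<in> S \<and> e_right src tgt f \<in> S)" if f: "f \<in> E" "src f \<noteq> tgt f" for f
  proof
    assume a: "e_tilde src tgt f \<in> S \<and> e_right src tgt f \<in> S"
    show False
    proof (rule PC[of "e_tilde src tgt f" "e_right src tgt f" "e_node (tgt f)" "e_node (tgt f)"])
      show "\<forall>i. e_tilde src tgt f i + e_right src tgt f i = e_node (tgt f) i + e_node (tgt f) i"
        unfolding e_tilde_def e_right_def e_node_def by simp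
    qed (use a f st nA nZ rA tA neg_notin_Z[of "e_tilde src tgt f" "Inr f" V E, OF tval] in \<open>auto simp: Z_def\<close>)
  qed
  have P4: "\<not> (e_left src tgt f \<in> S \<and> e_right src tgt f \<in> S)" if f: "f \<in> E" "src f \<noteq> tgt f" for f
  proof
    assume a: "e_left src tgt f \<in> S \<and> e_right src tgt f \<in> S"
    show False
    proof (rule PC[of "e_left src tgt f" "e_right src tgt f" "e_edge f" "e_edge f"])
      show "\<forall>i. e_left src tgt f i + e_right src tgt f i = e_edge f i + e_edge f i"
        unfolding e_left_def e_right_def e_edge_def by simp
    qed (use a f eZ eA lA rA neg_notin_Z[of "e_left src tgt f" "Inl (tgt f)" V E, OF lval[OF f(2)]] in \<open>auto simp: Z_def\<close>)
  qed
  define R where "R = adj src tgt D"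
  define S' where "S' = {a\<in>S. a \<notin> range (e_node :: 'v \<Rightarrow> ('v,'e) pt)}"
  have stepL: "\<exists>p q. p \<in> S' \<and> q \<in> S' \<and> (\<forall>i. p i - q i = e_node z i - e_node y i)"
    if "(y,z) \<in> R" for y z
  proof -
    from that obtain f where f: "f \<in> D" and yz: "(y = src f \<and> z = tgt f) \<or> (y = tgt f \<and> z = src f)"
      unfolding R_def adj_def by blast
    from f have fE: "f \<in> E" and ne: "src f \<noteq> tgt f" and ef: "e_edge f \<in> S"
      and lr: "e_left src tgt f \<in> S \<or> e_right src tgt f \<in> S"
      unfolding D_def double_edges_def by auto
    have efS': "e_edge f \<in> S'" using ef edge_notin_nodes[of f] unfolding S'_def by simp
    have lS': "e_left src tgt f \<in> S'" if "e_left src tgt f \<in> S"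
      using that neg_notin_nodes[of "e_left src tgt f" "Inl (tgt f)", OF lval[OF ne]] unfolding S'_def by simp
    have rS': "e_right src tgt f \<in> S'" if "e_right src tgt f \<in> S"
      using that neg_notin_nodes[of "e_right src tgt f" "Inl (src f)", OF rval[OF ne]] unfolding S'_def by simp
    consider (a) "y = src f" "z = tgt f" "e_left src tgt f \<in> S"
      | (b) "y = src f" "z = tgt f" "e_right src tgt f \<in> S"
      | (c) "y = tgt f" "z = src f" "e_left src tgt f \<in> S"
      | (d) "y = tgt f" "z = src f" "e_right src tgt f \<in> S"
      using yz lr by blast
    then show ?thesis
    proof cases
      case a then show ?thesis using efS' lS'
        by (intro exI[of _ "e_edge f"] exI[of _ "e_left src tgt f"]) (auto simp: e_edge_def e_left_def e_node_def)
    next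
      case b then show ?thesis using efS' rS'
        by (intro exI[of _ "e_right src tgt f"] exI[of _ "e_edge f"]) (auto simp: e_edge_def e_right_def e_node_def)
    next
      case c then show ?thesis using efS' lS'
        by (intro exI[of _ "e_left src tgt f"] exI[of _ "e_edge f"]) (auto simp: e_edge_def e_left_def e_node_def)
    next
      case d then show ?thesis using efS' rS'
        by (intro exI[of _ "e_edge f"] exI[of _ "e_right src tgt f"]) (auto simp: e_edge_def e_right_def e_node_def)
    qed
  qed
  have walk: "\<exists>\<mu>. (\<forall>a. a \<notin> S' \<longrightarrow> \<mu> a = 0) \<and> (\<Sum>a\<in>S. \<mu> a) = 0
      \<and> (\<forall>i. (\<Sum>a\<in>S. \<mu> a * a i) = e_node y i - e_node x i)"
    if "(x,y) \<in> R\<^sup>*" for x y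
    using that
  proof (induction rule: rtrancl_induct)
    case base
    show ?case by (intro exI[of _ "\<lambda>_. 0"]) simp
  next
    case (step y z)
    from step.IH obtain \<mu> where m1: "\<forall>a. a \<notin> S' \<longrightarrow> \<mu> a = 0" and m2: "(\<Sum>a\<in>S. \<mu> a) = 0"
      and m3: "\<forall>i. (\<Sum>a\<in>S. \<mu> a * a i) = e_node y i - e_node x i" by blast
    from stepL[OF step(2)] obtain p q where pq: "p \<in> S'" "q \<in> S'"
      "\<forall>i. p i - q i = e_node z i - e_node y i" by blast
    have pS: "p \<in> S" "q \<in> S" using pq unfolding S'_def by auto
    define \<nu> where "\<nu> a = \<mu> a + (if a = p then 1 else 0) - (if a = q then 1 else 0)" for a
    have "(\<Sum>a\<in>S. \<nu> a) = 0" unfolding \<nu>_def using m2 pS finS by (simp add: sum.distrib sum_subtractf)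
    moreover have "(\<Sum>a\<in>S. \<nu> a * a i) = e_node z i - e_node x i" for i
    proof -
      have "(\<Sum>a\<in>S. \<nu> a * a i) = (\<Sum>a\<in>S. \<mu> a * a i + (if a = p then p i else 0) - (if a = q then q i else 0))"
        unfolding \<nu>_def by (intro sum.cong) (auto simp: algebra_simps)
      also have "\<dots> = (\<Sum>a\<in>S. \<mu> a * a i) + (\<Sum>a\<in>S. if a = p then p i else 0) - (\<Sum>a\<in>S. if a = q then q i else 0)"
        by (simp only: sum_subtractf sum.distrib)
      also have "\<dots> = (\<Sum>a\<in>S. \<mu> a * a i) + p i - q i"
        by (simp only: sum.delta[OF finS] pS if_True)
      finally show ?thesis using m3[rule_format, of i] pq(3)[rule_format, of i] by linarith
    qed
    moreover have "\<forall>a. a \<notin> S' \<longrightarrow> \<nu> a = 0" using m1 pq unfolding \<nu>_def by auto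
    ultimately show ?case by blast
  qed
  have Rsym: "(y,x) \<in> R\<^sup>*" if "(x,y) \<in> R\<^sup>*" for x y
    using that
  proof (induction rule: rtrancl_induct)
    case (step y z)
    have "(z,y) \<in> R" using step(2) unfolding R_def adj_def by blast
    then show ?case using step(3) by (rule converse_rtrancl_into_rtrancl)
  qed simp
  show ?thesis
  proof
    fix C assume "C \<in> components V src tgt (double_edges E src tgt S)"
    then obtain u where uV: "u \<in> V" and Cdef: "C = component V src tgt D u"
      unfolding components_def D_def by auto
    have Ceq: "C = {w\<in>V. (u,w) \<in> R\<^sup>*}" unfolding Cdef component_def R_def ..
    have un: "w1 = w2" if w1: "w1 \<in> C \<inter> sel" and w2: "w2 \<in> C \<inter> sel" for w1 w2
    proof (rule ccontr)
      assume ne: "w1 \<noteq> w2"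
      have "(w1,u) \<in> R\<^sup>*" using w1 Rsym unfolding Ceq by auto
      moreover have "(u,w2) \<in> R\<^sup>*" using w2 unfolding Ceq by auto
      ultimately have "(w1,w2) \<in> R\<^sup>*" by simp
      from walk[OF this] obtain \<mu> where m1: "\<forall>a. a \<notin> S' \<longrightarrow> \<mu> a = 0" and m2: "(\<Sum>a\<in>S. \<mu> a) = 0"
        and m3: "\<forall>i. (\<Sum>a\<in>S. \<mu> a * a i) = e_node w2 i - e_node w1 i" by blast
      have n1: "e_node w1 \<in> S" and n2: "e_node w2 \<in> S" using w1 w2 unfolding sel_def selected_nodes_def by auto
      define \<nu> where "\<nu> a = \<mu> a + (if a = e_node w1 then 1 else 0) - (if a = e_node w2 then 1 else 0)" for a
      have s1: "(\<Sum>a\<in>S. \<nu> a) = 0" unfolding \<nu>_def using m2 n1 n2 finS by (simp add: sum.distrib sum_subtractf)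
      have s2: "(\<Sum>a\<in>S. \<nu> a * a i) = 0" for i
      proof -
        have "(\<Sum>a\<in>S. \<nu> a * a i) = (\<Sum>a\<in>S. \<mu> a * a i + (if a = e_node w1 then e_node w1 i else 0)
               - (if a = e_node w2 then e_node w2 i else 0))"
          unfolding \<nu>_def by (intro sum.cong) (auto simp: algebra_simps)
        also have "\<dots> = (\<Sum>a\<in>S. \<mu> a * a i) + (\<Sum>a\<in>S. if a = e_node w1 then e_node w1 i else 0) - (\<Sum>a\<in>S. if a = e_node w2 then e_node w2 i else 0)"
          by (simp only: sum_subtractf sum.distrib)
        also have "\<dots> = (\<Sum>a\<in>S. \<mu> a * a i) + e_node w1 i - e_node w2 i"
          by (simp only: sum.delta[OF finS] n1 n2 if_True)
        finally show ?thesis using m3[rule_format, of i] by linarith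
      qed
      have imp: "((\<Sum>a\<in>S. \<nu> a) = 0 \<and> (\<forall>i\<in>I. (\<Sum>a\<in>S. \<nu> a * a i) = 0)) \<longrightarrow> (\<forall>a\<in>S. \<nu> a = 0)"
        using ind unfolding aff_indep_def by (rule spec)
      have "\<forall>a\<in>S. \<nu> a = 0" using imp s1 s2 by blast
      then have "\<nu> (e_node w2) = 0" using n2 by blast
      moreover have "\<mu> (e_node w2) = 0" using m1 unfolding S'_def by auto
      moreover have "e_node w2 \<noteq> (e_node w1 :: ('v,'e) pt)" using ne e_node_inj[of w2 w1] by blast
      ultimately show False unfolding \<nu>_def by simp
    qed
    have ex: "\<exists>w. w \<in> C \<inter> sel"
    proof (rule ccontr)
      assume "\<not> (\<exists>w. w \<in> C \<inter> sel)"
      then have empty: "C \<inter> sel = {}" by blast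
      define \<alpha> where "\<alpha> x = (if x \<in> C then 1 else (0::real))" for x
      define \<beta> where "\<beta> f = (if e_edge f \<in> S then 0
          else if e_tilde src tgt f \<in> S then \<alpha> (src f) + \<alpha> (tgt f)
          else if e_left src tgt f \<in> S then \<alpha> (tgt f) - \<alpha> (src f)
          else if e_right src tgt f \<in> S then \<alpha> (src f) - \<alpha> (tgt f) else 0)" for f
      define c' where "c' = case_sum \<alpha> \<beta>"
      have IV: "Inl x \<in> I" if "x \<in> V" for x using that unfolding I_def coords_def by auto
      have IE: "Inr f \<in> I" if "f \<in> E" for f using that unfolding I_def coords_def by auto
      have ln: "lin I c' (e_node x) = \<alpha> x" if "x \<in> V" for x
        unfolding e_node_def using that by (simp add: lin_unitv finI IV c'_def)
      have le: "lin I c' (e_edge f) = \<beta> f" if "f \<in> E" for f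
        unfolding e_edge_def using that by (simp add: lin_unitv finI IE c'_def)
      have lt: "lin I c' (e_tilde src tgt f) = \<alpha> (src f) + \<alpha> (tgt f) - \<beta> f" if "f \<in> E" for f
        unfolding e_tilde_def using that st[OF that]
        by (simp add: lin_add lin_diff lin_neg lin_unitv finI IV IE c'_def)
      have ll: "lin I c' (e_left src tgt f) = \<alpha> (src f) - \<alpha> (tgt f) + \<beta> f" if "f \<in> E" for f
        unfolding e_left_def using that st[OF that]
        by (simp add: lin_add lin_diff lin_neg lin_unitv finI IV IE c'_def)
      have lr: "lin I c' (e_right src tgt f) = - \<alpha> (src f) + \<alpha> (tgt f) + \<beta> f" if "f \<in> E" for f
        unfolding e_right_def using that st[OF that]
        by (simp add: lin_add lin_diff lin_neg lin_unitv finI IV IE c'_def)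
      have clos: "\<alpha> (src f) = \<alpha> (tgt f)" if "f \<in> D" for f
      proof -
        have fE: "f \<in> E" using that unfolding D_def double_edges_def by auto
        have "(src f, tgt f) \<in> R" "(tgt f, src f) \<in> R" using that unfolding R_def adj_def by auto
        then have "src f \<in> C \<longleftrightarrow> tgt f \<in> C"
        proof -
          assume e1: "(src f, tgt f) \<in> R" and e2: "(tgt f, src f) \<in> R"
          have "(u, tgt f) \<in> R\<^sup>*" if "(u, src f) \<in> R\<^sup>*" using rtrancl_into_rtrancl[OF that e1] .
          moreover have "(u, src f) \<in> R\<^sup>*" if "(u, tgt f) \<in> R\<^sup>*" using rtrancl_into_rtrancl[OF that e2] .
          ultimately show ?thesis using st[OF fE] unfolding Ceq by blast
        qed
        then show ?thesis unfolding \<alpha>_def by simp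
      qed
      have zero: "\<forall>a\<in>S. lin I c' a = 0"
      proof
        fix a assume aS: "a \<in> S"
        then have "a \<in> A" using SA by auto
        then consider (n) x where "x \<in> V" "a = e_node x" | (e) f where "f\<in>E" "a = e_edge f"
          | (t) f where "f\<in>E" "a = e_tilde src tgt f" | (l) f where "f\<in>E" "a = e_left src tgt f"
          | (r) f where "f\<in>E" "a = e_right src tgt f"
          unfolding A_def cosmo_points_def by blast
        then show "lin I c' a = 0"
        proof cases
          case (n x)
          then have "x \<in> sel" using aS unfolding sel_def selected_nodes_def by auto
          then have "x \<notin> C" using empty by auto
          then show ?thesis using n ln unfolding \<alpha>_def by simp
        next
          case (e f) then show ?thesis using le aS unfolding \<beta>_def by simp
        next
          case (t f)
          then have "e_edge f \<notin> S" using P1 aS by blast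
          then show ?thesis using t lt aS unfolding \<beta>_def by simp
        next
          case (l f)
          show ?thesis
          proof (cases "e_edge f \<in> S")
            case True
            have "\<alpha> (src f) = \<alpha> (tgt f)"
            proof (cases "src f = tgt f")
              case False
              then have "f \<in> D" using True l aS unfolding D_def double_edges_def by auto
              then show ?thesis using clos by blast
            qed simp
            then show ?thesis using l ll[OF l(1)] True unfolding \<beta>_def by simp
          next
            case False
            then have ne: "src f \<noteq> tgt f" using l aS lloop by auto
            then have "e_tilde src tgt f \<notin> S" using P2 l aS by blast
            then show ?thesis using l ll[OF l(1)] False aS unfolding \<beta>_def by simp
          qed
        next
          case (r f)
          show ?thesis
          proof (cases "e_edge f \<in> S")
            case True
            have "\<alpha> (src f) = \<alpha> (tgt f)"
            proof (cases "src f = tgt f")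
              case False
              then have "f \<in> D" using True r aS unfolding D_def double_edges_def by auto
              then show ?thesis using clos by blast
            qed simp
            then show ?thesis using r lr[OF r(1)] True unfolding \<beta>_def by simp
          next
            case False
            then have ne: "src f \<noteq> tgt f" using r aS rloop by auto
            then have "e_tilde src tgt f \<notin> S" "e_left src tgt f \<notin> S" using P3 P4 r aS by blast+
            then show ?thesis using r lr[OF r(1)] False aS unfolding \<beta>_def by simp
          qed
        qed
      qed
      have uC: "u \<in> C" using uV unfolding Ceq by simp
      have "lin I c' (e_node u) > 0" using ln[OF uV] uC unfolding \<alpha>_def by simp
      from tilt[OF finA SA S1 S2 zero nA[OF uV] this] Smax show False unfolding Th by blast
    qed
    from ex obtain w where w: "w \<in> C \<inter> sel" by blast
    have "C \<inter> sel = {w}" using w un by blast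
    then show "card (C \<inter> selected_nodes V S) = 1" unfolding sel_def by simp
  qed
qed

end
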